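(* Let $a<b$ be real numbers and let $f$ be a real function differentiable on $[a,b]$ (one-sided derivatives at the endpoints) such that $f(a)=f(b)$ and $a,b$ are $f$-separated. Then there exists $z\in\,]a,b[$ such that $f'(z)=0$ and the points $a,z,b$ are $f'$-separated, i.e. $f'$ is non-constant on $[a,z]$ and $f'$ is non-constant on $[z,b]$.
   Context: For a real function $f$ and real numbers $a<b$, the points $a,b$ are called $f$-separated if $f$ is defined on $[a,b]$ and non-constant there, i.e. there is $c\in[a,b]$ with $f(c)\neq f(a)$. A strictly increasing family of points $a_0<a_1<\dots$ is $f$-separated if every two consecutive points of it are $f$-separated. *)

theory Defs
  imports Complex_Main
begin

text \<open>Points a < b are f-separated: f is non-constant on [a,b]
  (f is total, so "defined on [a,b]" is automatic).\<close>
definition f_separated :: "(real \<Rightarrow> real) \<Rightarrow> real \<Rightarrow> real \<Rightarrow> bool" where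
  "f_separated f a b \<longleftrightarrow> a < b \<and> (\<exists>c\<in>{a..b}. f c \<noteq> f a)"

end

theory Submission
  imports Defs
begin

lemma max_case:
  fixes f f' :: "real \<Rightarrow> real" and a b :: real
  assumes ab: "a < b"
    and D: "\<forall>x\<in>{a..b}. (f has_real_derivative f' x) (at x within {a..b})"
    and fab: "f a = f b"
    and c: "c \<in> {a..b}" "f c > f a"
  shows "\<exists>z. a < z \<and> z < b \<and> f' z = 0 \<and> f_separated f' a z \<and> f_separated f' z b"
proof -
  have cont: "continuous_on {a..b} f"
    using D DERIV_continuous continuous_on_eq_continuous_within by blast
  have Dint: "DERIV f x :> f' x" if "a < x" "x < b" for x
  proof -
    have "(f has_real_derivative f' x) (at x within {a..b})" using D that by auto
    thus ?thesis using at_within_Icc_at[of a x b] that by simp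
  qed
  obtain z where z: "z \<in> {a..b}" "\<forall>y\<in>{a..b}. f y \<le> f z"
    using continuous_attains_sup[OF compact_Icc _ cont] ab by auto
  have fz: "f z > f a" using z(2) c by (meson less_le_trans)
  have az: "a < z" using z fz by (cases "z = a") auto
  have zb: "z < b" using z fz fab by (cases "z = b") auto
  have f'z: "f' z = 0"
  proof (rule DERIV_local_max[OF Dint[OF az zb], of "min (z - a) (b - z)"])
    show "0 < min (z - a) (b - z)" using az zb by simp
    show "\<forall>y. \<bar>z - y\<bar> < min (z - a) (b - z) \<longrightarrow> f y \<le> f z"
    proof (intro allI impI)
      fix y assume "\<bar>z - y\<bar> < min (z - a) (b - z)"
      hence "y \<in> {a..b}" by (simp add: abs_less_iff)
      thus "f y \<le> f z" using z(2) by blast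
    qed
  qed
  have "\<exists>c\<in>{a..z}. f' c \<noteq> f' a"
  proof (rule ccontr)
    assume H: "\<not> (\<exists>c\<in>{a..z}. f' c \<noteq> f' a)"
    have zin: "z \<in> {a..z}" using az by simp
    have "f' z = f' a" using H zin by blast
    hence all: "\<forall>c\<in>{a..z}. f' c = 0" using f'z H by metis
    have "f z = f a"
    proof (rule DERIV_isconst_end[OF az])
      show "continuous_on {a..z} f" by (rule continuous_on_subset[OF cont]) (use zb in auto)
      show "DERIV f x :> 0" if "a < x" "x < z" for x
        proof -
        have "f' x = 0" using all that zb by simp
        thus ?thesis using Dint[of x] that zb by simp
      qed
    qed
    thus False using fz by simp
  qed
  hence s1: "f_separated f' a z" using az unfolding f_separated_def by blast
  have "\<exists>c\<in>{z..b}. f' c \<noteq> f' z"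
  proof (rule ccontr)
    assume "\<not> (\<exists>c\<in>{z..b}. f' c \<noteq> f' z)"
    hence all: "\<forall>c\<in>{z..b}. f' c = 0" using f'z by metis
    have "f b = f z"
    proof (rule DERIV_isconst_end[OF zb])
      show "continuous_on {z..b} f" by (rule continuous_on_subset[OF cont]) (use az in auto)
      show "DERIV f x :> 0" if "z < x" "x < b" for x
        proof -
        have "f' x = 0" using all that az by simp
        thus ?thesis using Dint[of x] that az by simp
      qed
    qed
    thus False using fz fab by simp
  qed
  hence s2: "f_separated f' z b" using zb unfolding f_separated_def by blast
  show ?thesis using az zb f'z s1 s2 by blast
qed

theorem mainTheorem1:
  fixes f f' :: "real \<Rightarrow> real" and a b :: real
  assumes "a < b"
    and "\<forall>x\<in>{a..b}. (f has_real_derivative f' x) (at x within {a..b})"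
    and "f a = f b"
    and "f_separated f a b"
  shows "\<exists>z. a < z \<and> z < b \<and> f' z = 0 \<and> f_separated f' a z \<and> f_separated f' z b"
proof -
  obtain c where c: "c \<in> {a..b}" "f c \<noteq> f a" using assms(4) unfolding f_separated_def by blast
  show ?thesis
  proof (cases "f c > f a")
    case True
    then show ?thesis using max_case[OF assms(1-3) c(1)] by blast
  next
    case False
    hence lt: "(\<lambda>x. - f x) c > (\<lambda>x. - f x) a" using c(2) by simp
    have D': "\<forall>x\<in>{a..b}. ((\<lambda>x. - f x) has_real_derivative (\<lambda>x. - f' x) x) (at x within {a..b})"
    proof
      fix x assume "x \<in> {a..b}"
      then show "((\<lambda>x. - f x) has_real_derivative (\<lambda>x. - f' x) x) (at x within {a..b})"
        using DERIV_minus[OF bspec[OF assms(2)]] by simp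
    qed
    have fab': "(\<lambda>x. - f x) a = (\<lambda>x. - f x) b" using assms(3) by simp
    obtain z where z: "a < z" "z < b" "- f' z = 0" "f_separated (\<lambda>x. - f' x) a z"
        "f_separated (\<lambda>x. - f' x) z b"
      using max_case[OF assms(1) D' fab' c(1) lt] by blast
    have "f_separated f' a z" "f_separated f' z b"
      using z(4,5) unfolding f_separated_def by auto
    then show ?thesis using z by auto
  qed
qed

end
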